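(* Let $M\subseteq\mathbb{R}^n$ be a lattice-free polyhedron given by $M=\{x\in\mathbb{R}^n:a_i\cdot x\le b_i\ \forall i\in[m]\}$ with $m\in\mathbb{N}$, $a_1,\dots,a_m\in\mathbb{R}^n\setminus\{0\}$, $b_1,\dots,b_m\in\mathbb{R}$. Then there is a nonempty subset $I\subseteq[m]$ such that $P=\{x\in\mathbb{R}^n:a_i\cdot x\le b_i\ \forall i\in I\}$ can be represented as a direct Minkowski sum $P=\Delta\oplus U$, where $U$ is a $k$-dimensional linear subspace of $\mathbb{R}^n$ with $k\in\{0,\dots,n-1\}$ and $\Delta$ is an $(n-k)$-dimensional simplex.
   Context: A set $B\subseteq\mathbb{R}^n$ is lattice-free if it is an $n$-dimensional closed convex set with $\operatorname{int}(B)\cap\mathbb{Z}^n=\emptyset$. $[m]=\{1,\dots,m\}$. A Minkowski sum $A+B$ is direct, written $A\oplus B$, if every point of $A+B$ has a unique representation $a+b$ with $a\in A$, $b\in B$. *)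

theory Defs
  imports "HOL-Analysis.Analysis"
begin

definition int_lattice :: "(real ^ 'n) set" where
  "int_lattice = {x. \<forall>i. x $ i \<in> \<int>}"

definition lattice_free :: "(real ^ 'n) set \<Rightarrow> bool" where
  "lattice_free B \<longleftrightarrow> closed B \<and> convex B \<and> aff_dim B = int CARD('n)
      \<and> interior B \<inter> int_lattice = {}"

definition direct_sum_eq :: "'a::ab_group_add set \<Rightarrow> 'a set \<Rightarrow> 'a set \<Rightarrow> bool" where
  "direct_sum_eq P A B \<longleftrightarrow> P = {a + b | a b. a \<in> A \<and> b \<in> B}
      \<and> (\<forall>a1\<in>A. \<forall>a2\<in>A. \<forall>b1\<in>B. \<forall>b2\<in>B. a1 + b1 = a2 + b2 \<longrightarrow> a1 = a2 \<and> b1 = b2)"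

end

theory Submission
  imports Defs
begin


lemma round_close:
  fixes z :: "real ^ 'n"
  defines "p \<equiv> (\<chi> k. real_of_int (round (z $ k)))"
  shows "p \<in> int_lattice" "norm (p - z) \<le> real CARD('n)"
proof -
  show "p \<in> int_lattice" by (simp add: p_def int_lattice_def)
  have "norm (p - z) \<le> (\<Sum>k\<in>UNIV. \<bar>(p - z) $ k\<bar>)" by (rule norm_le_l1_cart)
  also have "\<dots> \<le> (\<Sum>k\<in>(UNIV::'n set). 1)"
  proof (rule sum_mono)
    fix k
    have "\<bar>real_of_int (round (z $ k)) - z $ k\<bar> \<le> 1/2"
      using of_int_round_abs_le by blast
    then show "\<bar>(p - z) $ k\<bar> \<le> 1" by (simp add: p_def)
  qed
  finally show "norm (p - z) \<le> real CARD('n)" by simp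
qed

lemma gordan_step:
  fixes a :: "nat \<Rightarrow> real ^ 'n" and b :: "nat \<Rightarrow> real" and x1 :: "real ^ 'n"
  assumes x1: "\<forall>i\<in>{1..m}. a i \<bullet> x1 \<le> b i"
    and nolat: "\<And>p. p \<in> int_lattice \<Longrightarrow> \<exists>i\<in>{1..m}. b i \<le> a i \<bullet> p"
  shows "0 \<in> convex hull (a ` {1..m})"
proof (rule ccontr)
  assume "0 \<notin> convex hull (a ` {1..m})"
  then obtain w \<beta> where w: "w \<noteq> 0" "0 < \<beta>" "\<forall>x\<in>convex hull (a ` {1..m}). w \<bullet> x > \<beta>"
    using separating_hyperplane_closed_0[of "convex hull (a ` {1..m})"]
      compact_imp_closed[OF finite_imp_compact_convex_hull[of "a ` {1..m}"]]
    by auto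
  have wa: "w \<bullet> a i > \<beta>" if "i \<in> {1..m}" for i
    using w(3) hull_inc[of "a i" "a ` {1..m}"] that by auto
  define R where "R = (\<Sum>i\<in>{1..m}. norm (a i))"
  have R: "\<And>i. i \<in> {1..m} \<Longrightarrow> norm (a i) \<le> R"
    unfolding R_def by (rule member_le_sum) auto
  define t where "t = (R * real CARD('n)) / \<beta> + 1"
  define z where "z = x1 - t *\<^sub>R w"
  define p :: "real ^ 'n" where "p = (\<chi> k. real_of_int (round (z $ k)))"
  have p: "p \<in> int_lattice" "norm (p - z) \<le> real CARD('n)"
    using round_close[of z] by (simp_all add: p_def)
  have "R \<ge> 0" unfolding R_def by (simp add: sum_nonneg)
  have tb: "t * \<beta> > R * real CARD('n)"
    using w(2) by (simp add: t_def field_simps)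
  have "a i \<bullet> p < b i" if i: "i \<in> {1..m}" for i
  proof -
    have "a i \<bullet> p = a i \<bullet> x1 - t * (w \<bullet> a i) + a i \<bullet> (p - z)"
      by (simp add: z_def inner_diff_right inner_commute algebra_simps)
    also have "a i \<bullet> (p - z) \<le> norm (a i) * norm (p - z)"
      by (rule order_trans[OF _ norm_cauchy_schwarz]) simp
    also have "norm (a i) * norm (p - z) \<le> R * real CARD('n)"
      using p(2) R[OF i] \<open>R \<ge> 0\<close> by (intro mult_mono) auto
    finally have "a i \<bullet> p \<le> a i \<bullet> x1 - t * (w \<bullet> a i) + R * real CARD('n)" by simp
    moreover have "t * (w \<bullet> a i) \<ge> t * \<beta>"
      using wa[OF i] \<open>R \<ge> 0\<close> w(2) by (intro mult_left_mono) (auto simp: t_def)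
    ultimately show ?thesis using x1 i tb by (smt (verit))
  qed
  then show False using nolat[OF p(1)] by force
qed



lemma min_indep:
  fixes a :: "nat \<Rightarrow> 'v::real_vector"
  assumes fin: "finite J" and j0: "j0 \<in> J" and lam: "\<forall>i\<in>J. lam i > 0"
    and dep: "(\<Sum>i\<in>J. lam i *\<^sub>R a i) = 0"
    and minimal: "\<And>J' mu. J' \<subseteq> J \<Longrightarrow> J' \<noteq> {} \<Longrightarrow> (\<forall>i\<in>J'. mu i > 0) \<Longrightarrow>
                   (\<Sum>i\<in>J'. mu i *\<^sub>R a i) = 0 \<Longrightarrow> card J \<le> card J'"
    and wsum: "(\<Sum>i\<in>J-{j0}. w i *\<^sub>R a i) = 0" and k: "k \<in> J-{j0}"
  shows "w k = 0"
proof (rule ccontr)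
  assume wk: "w k \<noteq> 0"
  define s :: real where "s = (if w k > 0 then 1 else -1)"
  define w' where "w' i = (if i = j0 then 0 else s * w i)" for i
  have w'k: "w' k > 0" using wk k by (auto simp: w'_def s_def)
  have "(\<Sum>i\<in>J. w' i *\<^sub>R a i) = (\<Sum>i\<in>J-{j0}. w' i *\<^sub>R a i)"
    using fin j0 by (simp add: sum.remove w'_def)
  also have "\<dots> = s *\<^sub>R (\<Sum>i\<in>J-{j0}. w i *\<^sub>R a i)"
    by (simp add: scaleR_sum_right w'_def)
  finally have w'sum: "(\<Sum>i\<in>J. w' i *\<^sub>R a i) = 0" using wsum by simp
  define K where "K = {i\<in>J. w' i > 0}"
  have K: "finite K" "K \<noteq> {}" using fin k w'k by (auto simp: K_def)
  define t where "t = Min ((\<lambda>i. lam i / w' i) ` K)"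
  have "t \<in> (\<lambda>i. lam i / w' i) ` K"
    unfolding t_def using K by (intro Min_in) auto
  then obtain i0 where i0: "i0 \<in> K" "t = lam i0 / w' i0" by auto
  have tle: "t \<le> lam i / w' i" if "i \<in> K" for i
    unfolding t_def using K that by (intro Min_le) auto
  have tpos: "t > 0" using i0 lam by (auto simp: K_def)
  define nu where "nu i = lam i - t * w' i" for i
  have nu_nonneg: "nu i \<ge> 0" if "i \<in> J" for i
  proof (cases "w' i > 0")
    case True
    then have "t * w' i \<le> lam i" using tle[of i] that by (auto simp: K_def field_simps)
    then show ?thesis by (simp add: nu_def)
  next
    case False
    then have "t * w' i \<le> 0" using tpos by (simp add: mult_nonneg_nonpos)
    then show ?thesis using lam that by (simp add: nu_def) (smt (verit))
  qed
  have nu0: "nu i0 = 0" using i0 by (auto simp: nu_def K_def)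
  define J' where "J' = {i\<in>J. nu i > 0}"
  have j0J': "j0 \<in> J'" using j0 lam by (auto simp: J'_def nu_def w'_def)
  have "i0 \<in> J" "i0 \<notin> J'" using i0 nu0 by (auto simp: J'_def K_def)
  then have "J' \<subset> J" by (auto simp: J'_def)
  then have cardlt: "card J' < card J" using fin by (simp add: psubset_card_mono)
  have "(\<Sum>i\<in>J'. nu i *\<^sub>R a i) = (\<Sum>i\<in>J. nu i *\<^sub>R a i)"
  proof (rule sum.mono_neutral_left[OF fin])
    show "J' \<subseteq> J" by (auto simp: J'_def)
    show "\<forall>i\<in>J - J'. nu i *\<^sub>R a i = 0"
      using nu_nonneg by (auto simp: J'_def) (metis order.antisym not_le)
  qed
  also have "\<dots> = (\<Sum>i\<in>J. lam i *\<^sub>R a i) - t *\<^sub>R (\<Sum>i\<in>J. w' i *\<^sub>R a i)"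
    by (simp add: nu_def scaleR_diff_left sum_subtractf scaleR_sum_right)
  also have "\<dots> = 0" using dep w'sum by simp
  finally have "card J \<le> card J'"
    by (intro minimal[of J' nu]) (use j0J' in \<open>auto simp: J'_def\<close>)
  then show False using cardlt by simp
qed



lemma riesz:
  fixes g :: "'v::euclidean_space \<Rightarrow> real"
  assumes "linear g"
  shows "\<exists>x. \<forall>y. x \<bullet> y = g y"
proof (intro exI allI)
  fix y
  have "g y = g (\<Sum>e\<in>Basis. (y \<bullet> e) *\<^sub>R e)" by (simp add: euclidean_representation)
  also have "\<dots> = (\<Sum>e\<in>Basis. (y \<bullet> e) * g e)"
    using assms by (simp add: linear_sum linear_scale)
  finally show "(\<Sum>e\<in>Basis. g e *\<^sub>R e) \<bullet> y = g y"
    by (simp add: inner_sum_left inner_sum_right inner_commute mult.commute)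
qed

lemma indep_image:
  fixes a :: "nat \<Rightarrow> 'v::euclidean_space"
  assumes fin: "finite J0"
    and ind: "\<And>w. (\<Sum>i\<in>J0. w i *\<^sub>R a i) = 0 \<Longrightarrow> \<forall>k\<in>J0. w k = 0"
  shows "inj_on a J0" "independent (a ` J0)"
proof -
  show inj: "inj_on a J0"
  proof (rule inj_onI, rule ccontr)
    fix i k assume ik: "i \<in> J0" "k \<in> J0" "a i = a k" "i \<noteq> k"
    define w :: "nat \<Rightarrow> real" where "w j = (if j = i then 1 else if j = k then -1 else 0)" for j
    have "(\<Sum>j\<in>J0. w j *\<^sub>R a j) = (\<Sum>j\<in>{i,k}. w j *\<^sub>R a j)"
      using ik fin by (intro sum.mono_neutral_right) (auto simp: w_def)
    also have "\<dots> = 0" using ik by (simp add: w_def)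
    finally show False using ind[of w] ik by (auto simp: w_def)
  qed
  show "independent (a ` J0)"
    unfolding independent_explicit
  proof (intro conjI allI impI ballI)
    show "finite (a ` J0)" using fin by simp
    fix c v assume c: "(\<Sum>v\<in>a ` J0. c v *\<^sub>R v) = 0" and v: "v \<in> a ` J0"
    have "(\<Sum>i\<in>J0. (c \<circ> a) i *\<^sub>R a i) = 0"
      using c sum.reindex[OF inj, of "\<lambda>v. c v *\<^sub>R v"] by (simp add: o_def)
    then show "c v = 0" using ind[of "c \<circ> a"] v by auto
  qed
qed

lemma solve_sys:
  fixes a :: "nat \<Rightarrow> 'v::euclidean_space"
  assumes fin: "finite J" and j0: "j0 \<in> J" and lam: "\<forall>i\<in>J. lam i > 0"
    and dep: "(\<Sum>i\<in>J. lam i *\<^sub>R a i) = 0"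
    and ind: "\<And>w. (\<Sum>i\<in>J-{j0}. w i *\<^sub>R a i) = 0 \<Longrightarrow> \<forall>k\<in>J-{j0}. w k = 0"
    and tsum: "(\<Sum>i\<in>J. lam i * t i) = 0"
  shows "\<exists>x. \<forall>i\<in>J. a i \<bullet> x = t i"
proof -
  have fin0: "finite (J-{j0})" using fin by simp
  note ii = indep_image[of "J-{j0}" a, OF fin0 ind]
  obtain g :: "'v \<Rightarrow> real" where g: "linear g" "\<forall>v\<in>a ` (J-{j0}). g v = t (inv_into (J-{j0}) a v)"
    using linear_independent_extend[OF ii(2), where f="\<lambda>v. t (inv_into (J-{j0}) a v)"] by auto
  obtain x where x: "\<forall>y. x \<bullet> y = g y" using riesz[OF g(1)] by blast
  have x0: "a i \<bullet> x = t i" if "i \<in> J-{j0}" for i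
  proof -
    have "a i \<bullet> x = g (a i)" using x by (metis inner_commute)
    also have "\<dots> = t i" using g(2) that ii(1) by simp
    finally show ?thesis .
  qed
  have "lam j0 * (a j0 \<bullet> x) = (\<Sum>i\<in>J. lam i *\<^sub>R a i) \<bullet> x - (\<Sum>i\<in>J-{j0}. lam i * (a i \<bullet> x))"
    using sum.remove[OF fin j0, of "\<lambda>i. lam i *\<^sub>R a i"] by (simp add: inner_sum_left inner_add_left)
  also have "\<dots> = - (\<Sum>i\<in>J-{j0}. lam i * t i)"
    using dep x0 by (simp add: sum_negf)
  also have "\<dots> = lam j0 * t j0"
    using tsum sum.remove[OF fin j0, of "\<lambda>i. lam i * t i"] by simp
  finally have "a j0 \<bullet> x = t j0" using lam j0 by force
  then show ?thesis using x0 by blast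
qed



lemma simplex_part:
  fixes a :: "nat \<Rightarrow> 'v::euclidean_space" and b lam :: "nat \<Rightarrow> real"
  assumes fin: "finite J" and j0: "j0 \<in> J" and lam: "\<forall>i\<in>J. lam i > 0"
    and dep: "(\<Sum>i\<in>J. lam i *\<^sub>R a i) = 0"
    and ind: "\<And>w. (\<Sum>i\<in>J-{j0}. w i *\<^sub>R a i) = 0 \<Longrightarrow> \<forall>k\<in>J-{j0}. w k = 0"
    and bpos: "(\<Sum>i\<in>J. lam i * b i) > 0"
  shows "\<exists>\<Delta>. (int (card J) - 1) simplex \<Delta> \<and>
           direct_sum_eq {x. \<forall>i\<in>J. a i \<bullet> x \<le> b i} \<Delta> {x. \<forall>i\<in>J. a i \<bullet> x = 0}"
proof -
  define \<beta> where "\<beta> = (\<Sum>i\<in>J. lam i * b i)"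
  have \<beta>: "\<beta> > 0" using bpos by (simp add: \<beta>_def)
  define tt where "tt j i = b i - (if i = j then \<beta> / lam j else 0)" for j i
  have ex: "\<exists>x. \<forall>i\<in>J. a i \<bullet> x = tt j i" if j: "j \<in> J" for j
  proof (rule solve_sys[OF fin j0 lam dep ind])
    have 1: "(\<Sum>i\<in>J. lam i * tt j i) = (\<Sum>i\<in>J. lam i * b i) - (\<Sum>i\<in>J. lam i * (if i = j then \<beta> / lam j else 0))"
      unfolding tt_def by (simp add: right_diff_distrib sum_subtractf)
    have 2: "(\<Sum>i\<in>J. lam i * (if i = j then \<beta> / lam j else 0)) = (\<Sum>i\<in>J. if i = j then lam j * (\<beta> / lam j) else 0)"
      by (rule sum.cong) auto
    have 3: "(\<Sum>i\<in>J. if i = j then lam j * (\<beta> / lam j) else 0) = \<beta>"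
      using j lam fin by force
    show "(\<Sum>i\<in>J. lam i * tt j i) = 0" using 1 2 3 by (simp add: \<beta>_def)
  qed
  define v where "v j = (SOME x. \<forall>i\<in>J. a i \<bullet> x = tt j i)" for j
  have vp: "a i \<bullet> v j = tt j i" if "j \<in> J" "i \<in> J" for i j
    using someI_ex[OF ex[OF that(1)]] that(2) unfolding v_def by blast
  have comb: "a i \<bullet> (\<Sum>j\<in>J. w j *\<^sub>R v j) = sum w J * b i - w i * \<beta> / lam i"
    if i: "i \<in> J" for i w
  proof -
    have "a i \<bullet> (\<Sum>j\<in>J. w j *\<^sub>R v j) = (\<Sum>j\<in>J. w j * tt j i)"
      using vp i by (simp add: inner_sum_right)
    also have "\<dots> = (\<Sum>j\<in>J. w j * b i) - (\<Sum>j\<in>J. w j * (if i = j then \<beta> / lam j else 0))"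
      unfolding tt_def by (simp add: right_diff_distrib sum_subtractf)
    also have "(\<Sum>j\<in>J. w j * (if i = j then \<beta> / lam j else 0)) = (\<Sum>j\<in>J. if j = i then w i * (\<beta> / lam i) else 0)"
      by (rule sum.cong) auto
    also have "(\<Sum>j\<in>J. if j = i then w i * (\<beta> / lam i) else 0) = w i * \<beta> / lam i"
      using i fin lam by force
    also have "(\<Sum>j\<in>J. w j * b i) = sum w J * b i" by (simp add: sum_distrib_right)
    finally show ?thesis .
  qed
  have injv: "inj_on v J"
  proof (rule inj_onI, rule ccontr)
    fix j k assume jk: "j \<in> J" "k \<in> J" "v j = v k" "j \<noteq> k"
    have "a j \<bullet> v j = b j - \<beta> / lam j" using vp[of j j] jk by (simp add: tt_def)
    moreover have "a j \<bullet> v k = b j" using vp[of k j] jk by (simp add: tt_def)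
    moreover have "\<beta> / lam j > 0" using \<beta> lam jk by simp
    ultimately show False using jk \<beta> lam by force
  qed
  define DD where "DD = {(\<Sum>j\<in>J. w j *\<^sub>R v j) | w. (\<forall>j\<in>J. 0 \<le> w j) \<and> sum w J = 1}"
  have hullD: "convex hull (v ` J) = DD"
  proof -
    have "v ` J = \<Union>((\<lambda>i. {v i}) ` J)" by auto
    then have "convex hull (v ` J) = {sum (\<lambda>i. c i *\<^sub>R s i) J | c s. (\<forall>i\<in>J. c i \<ge> 0) \<and> sum c J = 1 \<and> (\<forall>i\<in>J. s i \<in> {v i})}"
      using convex_hull_finite_union[OF fin, of "\<lambda>i. {v i}"] by simp
    also have "\<dots> = DD"
    proof -
      have "sum (\<lambda>i. c i *\<^sub>R s i) J = (\<Sum>j\<in>J. c j *\<^sub>R v j)" if "\<forall>i\<in>J. s i \<in> {v i}" for c s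
        using that by (intro sum.cong) auto
      then show ?thesis unfolding DD_def by fastforce
    qed
    finally show ?thesis .
  qed
  have aff: "\<not> affine_dependent (v ` J)"
  proof
    assume "affine_dependent (v ` J)"
    then obtain U where U: "sum U (v ` J) = 0" "\<exists>x\<in>v ` J. U x \<noteq> 0" "(\<Sum>x\<in>v ` J. U x *\<^sub>R x) = 0"
      using affine_dependent_explicit_finite[of "v ` J"] fin by auto
    define w where "w = U \<circ> v"
    have w1: "sum w J = 0" using U(1) by (simp add: w_def sum.reindex[OF injv])
    have w2: "(\<Sum>j\<in>J. w j *\<^sub>R v j) = 0"
      using U(3) sum.reindex[OF injv, of "\<lambda>x. U x *\<^sub>R x"] by (simp add: w_def)
    obtain i where i: "i \<in> J" "w i \<noteq> 0" using U(2) by (auto simp: w_def)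
    have "0 = a i \<bullet> (\<Sum>j\<in>J. w j *\<^sub>R v j)" using w2 by simp
    also have "\<dots> = - (w i * \<beta> / lam i)" using comb[OF i(1)] w1 by simp
    finally show False using i \<beta> lam by force
  qed
  have simp: "(int (card J) - 1) simplex (convex hull (v ` J))"
    using aff card_image[OF injv] by (intro simplex_convex_hull) simp
  define P where "P = {x. \<forall>i\<in>J. a i \<bullet> x \<le> b i}"
  define U where "U = {x. \<forall>i\<in>J. a i \<bullet> x = 0}"
  have ds1: "P = {d + u | d u. d \<in> DD \<and> u \<in> U}"
  proof (intro set_eqI iffI)
    fix x assume x: "x \<in> P"
    define w where "w j = lam j * (b j - a j \<bullet> x) / \<beta>" for j
    have "sum w J = ((\<Sum>j\<in>J. lam j * b j) - (\<Sum>j\<in>J. lam j *\<^sub>R a j) \<bullet> x) / \<beta>"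
      by (simp add: w_def sum_divide_distrib[symmetric] right_diff_distrib sum_subtractf inner_sum_left)
    also have "\<dots> = 1" using \<beta> dep by (simp add: \<beta>_def)
    finally have sw: "sum w J = 1" .
    have wn: "\<forall>j\<in>J. 0 \<le> w j" using x lam \<beta> by (auto simp: w_def P_def)
    define y where "y = (\<Sum>j\<in>J. w j *\<^sub>R v j)"
    have yD: "y \<in> DD" unfolding DD_def y_def using sw wn by blast
    have "a i \<bullet> y = a i \<bullet> x" if "i \<in> J" for i
      using comb[OF that, of w] sw lam that \<beta> by (force simp: y_def w_def)
    then have "x - y \<in> U" by (simp add: U_def inner_diff_right)
    then show "x \<in> {d + u | d u. d \<in> DD \<and> u \<in> U}" using yD by force
  next
    fix x assume "x \<in> {d + u | d u. d \<in> DD \<and> u \<in> U}"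
    then obtain w u where w: "\<forall>j\<in>J. 0 \<le> w j" "sum w J = 1" and u: "u \<in> U"
      and x: "x = (\<Sum>j\<in>J. w j *\<^sub>R v j) + u" unfolding DD_def by blast
    have "a i \<bullet> x \<le> b i" if "i \<in> J" for i
    proof -
      have "a i \<bullet> x = b i - w i * \<beta> / lam i"
        using comb[OF that, of w] w(2) u that by (simp add: x inner_add_right U_def)
      moreover have "w i * \<beta> / lam i \<ge> 0" using w(1) \<beta> lam that by (simp add: less_imp_le)
      ultimately show ?thesis by simp
    qed
    then show "x \<in> P" by (simp add: P_def)
  qed
  have ds2: "\<forall>d1\<in>DD. \<forall>d2\<in>DD. \<forall>u1\<in>U. \<forall>u2\<in>U. d1 + u1 = d2 + u2 \<longrightarrow> d1 = d2 \<and> u1 = u2"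
  proof (intro ballI impI)
    fix d1 d2 u1 u2 assume d: "d1 \<in> DD" "d2 \<in> DD" "u1 \<in> U" "u2 \<in> U" and e: "d1 + u1 = d2 + u2"
    obtain w1 where w1: "sum w1 J = 1" "d1 = (\<Sum>j\<in>J. w1 j *\<^sub>R v j)" using d(1) unfolding DD_def by blast
    obtain w2 where w2: "sum w2 J = 1" "d2 = (\<Sum>j\<in>J. w2 j *\<^sub>R v j)" using d(2) unfolding DD_def by blast
    have "w1 i = w2 i" if i: "i \<in> J" for i
    proof -
      have "a i \<bullet> (d1 + u1) = a i \<bullet> (d2 + u2)" using e by simp
      then have "a i \<bullet> d1 = a i \<bullet> d2" using d(3,4) i by (simp add: inner_add_right U_def)
      then have "w1 i * \<beta> / lam i = w2 i * \<beta> / lam i"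
        using comb[OF i, of w1] comb[OF i, of w2] w1 w2 by simp
      then show ?thesis using \<beta> lam i by (force simp: field_simps)
    qed
    then have "d1 = d2" using w1 w2 by (metis (no_types, lifting) sum.cong)
    then show "d1 = d2 \<and> u1 = u2" using e by simp
  qed
  show ?thesis
    using simp ds1 ds2 unfolding direct_sum_eq_def hullD P_def U_def by blast
qed



lemma dim_part:
  fixes a :: "nat \<Rightarrow> 'v::euclidean_space" and lam :: "nat \<Rightarrow> real"
  assumes fin: "finite J" and j0: "j0 \<in> J" and lam: "\<forall>i\<in>J. lam i > 0"
    and dep: "(\<Sum>i\<in>J. lam i *\<^sub>R a i) = 0"
    and ind: "\<And>w. (\<Sum>i\<in>J-{j0}. w i *\<^sub>R a i) = 0 \<Longrightarrow> \<forall>k\<in>J-{j0}. w k = 0"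
  shows "dim {x. \<forall>i\<in>J. a i \<bullet> x = 0} + (card J - 1) = DIM('v)"
proof -
  have fin0: "finite (J-{j0})" using fin by simp
  note ii = indep_image[of "J-{j0}" a, OF fin0 ind]
  define B where "B = a ` (J-{j0})"
  have cardB: "dim (span B) = card J - 1"
    using ii fin j0 by (simp add: B_def dim_eq_card_independent card_image)
  have inB: "a i \<in> span B" if "i \<in> J" for i
  proof (cases "i = j0")
    case True
    have "lam j0 *\<^sub>R a j0 + (\<Sum>i\<in>J-{j0}. lam i *\<^sub>R a i) = 0"
      using dep sum.remove[OF fin j0, of "\<lambda>i. lam i *\<^sub>R a i"] by simp
    then have h: "lam j0 *\<^sub>R a j0 = - (\<Sum>i\<in>J-{j0}. lam i *\<^sub>R a i)"
      by (simp add: eq_neg_iff_add_eq_0)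
    have "a j0 = (1 / lam j0) *\<^sub>R (lam j0 *\<^sub>R a j0)" using lam j0 by force
    also have "\<dots> = (1 / lam j0) *\<^sub>R (- (\<Sum>i\<in>J-{j0}. lam i *\<^sub>R a i))" using h by simp
    finally have e: "a j0 = (1 / lam j0) *\<^sub>R (- (\<Sum>i\<in>J-{j0}. lam i *\<^sub>R a i))" .
    have "(\<Sum>i\<in>J-{j0}. lam i *\<^sub>R a i) \<in> span B"
      unfolding B_def by (intro span_sum span_mul span_base) auto
    then show ?thesis using True e by (metis span_mul span_neg)
  next
    case False
    then show ?thesis using that by (simp add: B_def span_base)
  qed
  have eq: "{x. \<forall>i\<in>J. a i \<bullet> x = 0} = {y \<in> UNIV. \<forall>x \<in> span B. orthogonal x y}"
  proof (intro set_eqI iffI)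
    fix y assume y: "y \<in> {x. \<forall>i\<in>J. a i \<bullet> x = 0}"
    have "orthogonal y x" if "x \<in> span B" for x
      by (rule orthogonal_to_span[OF that]) (use y in \<open>auto simp: B_def orthogonal_def inner_commute\<close>)
    then show "y \<in> {y \<in> UNIV. \<forall>x \<in> span B. orthogonal x y}"
      by (simp add: orthogonal_commute)
  next
    fix y assume "y \<in> {y \<in> UNIV. \<forall>x \<in> span B. orthogonal x y}"
    then show "y \<in> {x. \<forall>i\<in>J. a i \<bullet> x = 0}" using inB by (auto simp: orthogonal_def)
  qed
  have "dim {y \<in> UNIV. \<forall>x \<in> span B. orthogonal x y} + dim (span B) = dim (UNIV :: 'v set)"
    by (rule dim_subspace_orthogonal_to_vectors) auto
  then show ?thesis using eq cardB by simp
qed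



theorem lemma5p3:
  fixes m :: nat and a :: "nat \<Rightarrow> real ^ 'n" and b :: "nat \<Rightarrow> real"
  assumes nz: "\<forall>i\<in>{1..m}. a i \<noteq> 0"
    and lf: "lattice_free {x. \<forall>i\<in>{1..m}. a i \<bullet> x \<le> b i}"
  shows "\<exists>I. I \<subseteq> {1..m} \<and> I \<noteq> {} \<and>
           (\<exists>\<Delta> U k. subspace U \<and> dim U = k \<and> k < CARD('n) \<and>
              (int CARD('n) - int k) simplex \<Delta> \<and>
              direct_sum_eq {x. \<forall>i\<in>I. a i \<bullet> x \<le> b i} \<Delta> U)"
proof -
  define M where "M = {x. \<forall>i\<in>{1..m}. a i \<bullet> x \<le> b i}"
  have cM: "convex M" and adM: "aff_dim M = int CARD('n)" and lat: "interior M \<inter> int_lattice = {}"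
    using lf by (auto simp: lattice_free_def M_def)
  have "M \<noteq> {}" using adM by auto
  then have "rel_interior M \<noteq> {}" using cM by (simp add: rel_interior_eq_empty)
  moreover have "affine hull M = UNIV" using adM aff_dim_eq_full[of M] by simp
  ultimately have "interior M \<noteq> {}" by (simp add: rel_interior_interior)
  then obtain x1 where x1: "x1 \<in> interior M" by blast
  then obtain e where e: "e > 0" "ball x1 e \<subseteq> M" using mem_interior by blast
  have x1M: "x1 \<in> M" using x1 interior_subset by blast
  have strict: "a i \<bullet> x1 < b i" if i: "i \<in> {1..m}" for i
  proof -
    have na: "norm (a i) > 0" using nz i by simp
    define y where "y = x1 + (e / 2 / norm (a i)) *\<^sub>R a i"
    have "dist x1 y = e / 2" using na e by (simp add: y_def dist_norm)
    then have "y \<in> M" using e by auto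
    then have "a i \<bullet> y \<le> b i" using i by (simp add: M_def)
    moreover have "a i \<bullet> y = a i \<bullet> x1 + e / 2 * norm (a i)"
      using na by (simp add: y_def inner_add_right power2_norm_eq_inner[symmetric] power2_eq_square)
    moreover have "e / 2 * norm (a i) > 0" using na e by simp
    ultimately show ?thesis by linarith
  qed
  have nolat: "\<exists>i\<in>{1..m}. b i \<le> a i \<bullet> p" if p: "p \<in> int_lattice" for p
  proof (rule ccontr)
    assume "\<not> ?thesis"
    then have pO: "p \<in> (\<Inter>i\<in>{1..m}. {x. a i \<bullet> x < b i})" by auto
    have "open (\<Inter>i\<in>{1..m}. {x. a i \<bullet> x < b i})"
      by (intro open_INT) (auto intro: open_halfspace_lt)
    moreover have "(\<Inter>i\<in>{1..m}. {x. a i \<bullet> x < b i}) \<subseteq> M" by (auto simp: M_def less_imp_le)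
    ultimately have "p \<in> interior M" using pO interiorI by blast
    then show False using lat p by blast
  qed
  have "0 \<in> convex hull (a ` {1..m})"
    by (rule gordan_step[of m a x1 b]) (use x1M nolat in \<open>auto simp: M_def\<close>)
  then obtain u where u: "\<forall>v\<in>a ` {1..m}. 0 \<le> u v" "sum u (a ` {1..m}) = 1"
      "(\<Sum>v\<in>a ` {1..m}. u v *\<^sub>R v) = 0"
    using convex_hull_finite[of "a ` {1..m}"] by auto
  define A where "A = a ` {1..m}"
  define T0 where "T0 = {v\<in>A. u v > 0}"
  define rep where "rep v = (SOME i. i \<in> {1..m} \<and> a i = v)" for v
  have rep: "rep v \<in> {1..m} \<and> a (rep v) = v" if "v \<in> A" for v
  proof -
    have "\<exists>i. i \<in> {1..m} \<and> a i = v" using that by (auto simp: A_def)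
    then show ?thesis unfolding rep_def by (rule someI_ex)
  qed
  have injrep: "inj_on rep T0"
    by (rule inj_onI) (metis rep T0_def mem_Collect_eq)
  define Q where "Q J \<longleftrightarrow> J \<subseteq> {1..m} \<and> J \<noteq> {} \<and>
      (\<exists>mu. (\<forall>i\<in>J. mu i > 0) \<and> (\<Sum>i\<in>J. mu i *\<^sub>R a i) = 0)" for J
  have "Q (rep ` T0)"
    unfolding Q_def
  proof (intro conjI exI)
    show "rep ` T0 \<subseteq> {1..m}" using rep by (auto simp: T0_def)
    have "T0 \<noteq> {}"
    proof
      assume "T0 = {}"
      then have "\<forall>v\<in>A. u v = 0" using u(1) by (force simp: T0_def A_def)
      then have "sum u A = 0" by simp
      then show False using u(2) by (simp add: A_def)
    qed
    then show "rep ` T0 \<noteq> {}" by simp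
    show "\<forall>i\<in>rep ` T0. 0 < u (a i)" using rep by (auto simp: T0_def)
    have "(\<Sum>i\<in>rep ` T0. u (a i) *\<^sub>R a i) = (\<Sum>v\<in>T0. u (a (rep v)) *\<^sub>R a (rep v))"
      by (simp add: sum.reindex[OF injrep])
    also have "\<dots> = (\<Sum>v\<in>T0. u v *\<^sub>R v)"
      using rep by (intro sum.cong) (auto simp: T0_def)
    also have "\<dots> = (\<Sum>v\<in>A. u v *\<^sub>R v)"
      using u(1) by (intro sum.mono_neutral_left) (auto simp: T0_def A_def less_le)
    also have "\<dots> = 0" using u(3) by (simp add: A_def)
    finally show "(\<Sum>i\<in>rep ` T0. u (a i) *\<^sub>R a i) = 0" .
  qed
  then obtain J where QJ: "Q J" and Jmin: "\<And>J'. Q J' \<Longrightarrow> card J \<le> card J'"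
    using ex_has_least_nat[of Q "rep ` T0" card] by blast
  from QJ obtain lam where Jsub: "J \<subseteq> {1..m}" and Jne: "J \<noteq> {}"
    and lam: "\<forall>i\<in>J. lam i > 0" and dep: "(\<Sum>i\<in>J. lam i *\<^sub>R a i) = 0"
    unfolding Q_def by blast
  have fin: "finite J" using Jsub finite_subset by blast
  obtain j0 where j0: "j0 \<in> J" using Jne by blast
  have ind: "\<forall>k\<in>J-{j0}. w k = 0" if "(\<Sum>i\<in>J-{j0}. w i *\<^sub>R a i) = 0" for w
  proof
    fix k assume "k \<in> J - {j0}"
    show "w k = 0"
    proof (rule min_indep[OF fin j0 lam dep _ that \<open>k \<in> J - {j0}\<close>])
      fix J' mu assume "J' \<subseteq> J" "J' \<noteq> {}" "\<forall>i\<in>J'. mu i > 0" "(\<Sum>i\<in>J'. mu i *\<^sub>R a i) = 0"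
      then show "card J \<le> card J'" using Jmin[of J'] Jsub unfolding Q_def by blast
    qed
  qed
  have bpos: "(\<Sum>i\<in>J. lam i * b i) > 0"
  proof -
    have "(\<Sum>i\<in>J. lam i * (a i \<bullet> x1)) < (\<Sum>i\<in>J. lam i * b i)"
      using fin Jne lam strict Jsub by (intro sum_strict_mono) auto
    moreover have "(\<Sum>i\<in>J. lam i * (a i \<bullet> x1)) = (\<Sum>i\<in>J. lam i *\<^sub>R a i) \<bullet> x1"
      by (simp add: inner_sum_left)
    ultimately show ?thesis using dep by simp
  qed
  have card2: "card J \<ge> 2"
  proof (rule ccontr)
    assume "\<not> card J \<ge> 2"
    moreover have "card J \<ge> 1" using fin Jne by (simp add: Suc_leI card_gt_0_iff)
    ultimately have "card J = 1" by simp
    then have "J = {j0}" using j0 by (metis card_1_singletonE singletonD)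
    then have "lam j0 *\<^sub>R a j0 = 0" using dep by simp
    then show False using lam j0 nz Jsub by auto
  qed
  obtain \<Delta> where \<Delta>: "(int (card J) - 1) simplex \<Delta>"
    "direct_sum_eq {x. \<forall>i\<in>J. a i \<bullet> x \<le> b i} \<Delta> {x. \<forall>i\<in>J. a i \<bullet> x = 0}"
    using simplex_part[OF fin j0 lam dep ind bpos] by blast
  define U where "U = {x :: real ^ 'n. \<forall>i\<in>J. a i \<bullet> x = 0}"
  have dimU: "dim U + (card J - 1) = CARD('n)"
    using dim_part[OF fin j0 lam dep ind] by (simp add: U_def)
  have subU: "subspace U"
    unfolding subspace_def U_def by (auto simp: inner_add_right)
  show ?thesis
  proof (intro exI conjI)
    show "J \<subseteq> {1..m}" "J \<noteq> {}" by fact+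
    show "subspace U" by fact
    show "dim U = dim U" ..
    show "dim U < CARD('n)" using dimU card2 by linarith
    have "int CARD('n) - int (dim U) = int (card J) - 1" using dimU card2 by linarith
    then show "(int CARD('n) - int (dim U)) simplex \<Delta>" using \<Delta>(1) by simp
    show "direct_sum_eq {x. \<forall>i\<in>J. a i \<bullet> x \<le> b i} \<Delta> U" using \<Delta>(2) by (simp add: U_def)
  qed
qed


end
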